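(* Let ${\bf u}\in\mathcal A^{\mathbb N}$ be an infinite word with its language closed under reversal and $D({\bf u})<+\infty$. There exists a positive integer $K$ such that for every factor $w$ of ${\bf u}$ of length at least $K$: if $w$ is not a palindrome, then the graph $\Gamma(w)$ is a tree; if $w$ is a palindrome, then the graph $\Theta(w)$ is a tree.
   Context: $\widetilde w$ is the reversal of $w$; $w$ is a palindrome if $w=\widetilde w$. Palindromic defect: for a finite word $w$ of length $n$, $D(w)=n+1-$(number of distinct palindromic factors of $w$, including the empty word), and $D({\bf u})=\sup D(w)$ over factors of ${\bf u}$. The language is closed under reversal if the reversal of every factor is a factor. With $E^+(w)=\{b: wb\text{ factor}\}$, $E^-(w)=\{a: aw\text{ factor}\}$, $E(w)=\{(a,b): awb\text{ factor}\}$: $\Gamma(w)$ is the bipartite graph on $(E^-(w)\times\{-1\})\cup(E^+(w)\times\{+1\})$ with edges $\{(a,-1),(b,+1)\}$ for $(a,b)\in E(w)$; for palindromic $w$, $\Theta(w)$ is the graph on $E^+(w)$ with edges $\{a,b\}$ for $(a,b)\in E(w)$, $a\neq b$. *)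

theory Defs
  imports Main "HOL-Library.Sublist"
begin

definition factor :: "'a list \<Rightarrow> (nat \<Rightarrow> 'a) \<Rightarrow> bool" where
  "factor w u \<longleftrightarrow> (\<exists>i. w = map u [i..<i + length w])"

definition palindrome :: "'a list \<Rightarrow> bool" where
  "palindrome w \<longleftrightarrow> rev w = w"

definition closed_under_reversal :: "(nat \<Rightarrow> 'a) \<Rightarrow> bool" where
  "closed_under_reversal u \<longleftrightarrow> (\<forall>w. factor w u \<longrightarrow> factor (rev w) u)"

(* palindromic factors of a finite word, including the empty word *)
definition pal_factors :: "'a list \<Rightarrow> 'a list set" where
  "pal_factors w = {p. sublist p w \<and> palindrome p}"

definition defect :: "'a list \<Rightarrow> nat" where
  "defect w = length w + 1 - card (pal_factors w)"

definition finite_defect :: "(nat \<Rightarrow> 'a) \<Rightarrow> bool" where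
  "finite_defect u \<longleftrightarrow> (\<exists>B. \<forall>w. factor w u \<longrightarrow> defect w \<le> B)"

definition ext_right :: "(nat \<Rightarrow> 'a) \<Rightarrow> 'a list \<Rightarrow> 'a set" where
  "ext_right u w = {b. factor (w @ [b]) u}"

definition ext_left :: "(nat \<Rightarrow> 'a) \<Rightarrow> 'a list \<Rightarrow> 'a set" where
  "ext_left u w = {a. factor (a # w) u}"

definition bi_ext :: "(nat \<Rightarrow> 'a) \<Rightarrow> 'a list \<Rightarrow> ('a \<times> 'a) set" where
  "bi_ext u w = {(a, b). factor (a # w @ [b]) u}"

definition walk :: "'v set \<Rightarrow> 'v set set \<Rightarrow> 'v list \<Rightarrow> bool" where
  "walk V E p \<longleftrightarrow> p \<noteq> [] \<and> set p \<subseteq> V \<and>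
     (\<forall>i. Suc i < length p \<longrightarrow> {p ! i, p ! Suc i} \<in> E)"

definition connected_graph :: "'v set \<Rightarrow> 'v set set \<Rightarrow> bool" where
  "connected_graph V E \<longleftrightarrow>
     (\<forall>x\<in>V. \<forall>y\<in>V. \<exists>p. walk V E p \<and> hd p = x \<and> last p = y)"

definition has_cycle :: "'v set \<Rightarrow> 'v set set \<Rightarrow> bool" where
  "has_cycle V E \<longleftrightarrow>
     (\<exists>p. walk V E p \<and> distinct p \<and> length p \<ge> 3 \<and> {last p, hd p} \<in> E)"

definition is_tree :: "'v set \<Rightarrow> 'v set set \<Rightarrow> bool" where
  "is_tree V E \<longleftrightarrow> finite V \<and> V \<noteq> {} \<and>
     E \<subseteq> {{x, y} | x y. x \<in> V \<and> y \<in> V \<and> x \<noteq> y} \<and>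
     connected_graph V E \<and> \<not> has_cycle V E"

(* Gamma(w): vertices (a,-1) encoded as Inl a, (b,+1) encoded as Inr b *)
definition Gamma_V :: "(nat \<Rightarrow> 'a) \<Rightarrow> 'a list \<Rightarrow> ('a + 'a) set" where
  "Gamma_V u w = Inl ` ext_left u w \<union> Inr ` ext_right u w"

definition Gamma_E :: "(nat \<Rightarrow> 'a) \<Rightarrow> 'a list \<Rightarrow> ('a + 'a) set set" where
  "Gamma_E u w = {{Inl a, Inr b} | a b. (a, b) \<in> bi_ext u w}"

definition Theta_V :: "(nat \<Rightarrow> 'a) \<Rightarrow> 'a list \<Rightarrow> 'a set" where
  "Theta_V u w = ext_right u w"

definition Theta_E :: "(nat \<Rightarrow> 'a) \<Rightarrow> 'a list \<Rightarrow> 'a set set" where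
  "Theta_E u w = {{a, b} | a b. (a, b) \<in> bi_ext u w \<and> a \<noteq> b}"

end

theory Submission
  imports Defs
begin

lemma pal_factors_mono: "pal_factors v \<subseteq> pal_factors (v @ [c])"
  unfolding pal_factors_def by (auto simp: sublist_snoc)

lemma finite_pal_factors: "finite (pal_factors v)"
proof -
  have "pal_factors v \<subseteq> set (sublists v)" unfolding pal_factors_def by auto
  thus ?thesis using finite_subset by blast
qed

lemma new_pal_suffix:
  assumes "s \<in> pal_factors (v @ [c]) - pal_factors v"
  shows "suffix s (v @ [c]) \<and> \<not> sublist s v \<and> palindrome s"
  using assms unfolding pal_factors_def by (auto simp: sublist_snoc)

lemma new_pal_unique:
  assumes a1: "s1 \<in> pal_factors (v @ [c]) - pal_factors v"
    and a2: "s2 \<in> pal_factors (v @ [c]) - pal_factors v"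
    and le: "length s1 \<le> length s2"
  shows "s1 = s2"
proof (rule ccontr)
  assume ne: "s1 \<noteq> s2"
  from new_pal_suffix[OF a1] have s1: "suffix s1 (v@[c])" "\<not> sublist s1 v" "rev s1 = s1"
    by (auto simp: palindrome_def)
  from new_pal_suffix[OF a2] have s2: "suffix s2 (v@[c])" "\<not> sublist s2 v" "rev s2 = s2"
    by (auto simp: palindrome_def)
  have suf: "suffix s1 s2" using suffix_length_suffix[OF s1(1) s2(1) le] .
  have lt: "length s1 < length s2"
  proof (rule ccontr)
    assume "\<not> ?thesis"
    hence "length s1 = length s2" using le by simp
    thus False using suf ne by (auto simp: suffix_def)
  qed
  have "prefix (rev s1) (rev s2)" using suf by (simp add: suffix_to_prefix)
  hence pre: "prefix s1 s2" using s1(3) s2(3) by simp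
  have "s2 \<noteq> []" using lt by auto
  then obtain s2' c' where s2e: "s2 = s2' @ [c']" by (metis rev_exhaust)
  have "prefix s1 s2'"
  proof -
    have "prefix s1 (s2' @ [c'])" using pre s2e by simp
    hence "s1 = s2' @ [c'] \<or> prefix s1 s2'" by (simp only: prefix_snoc)
    thus ?thesis using lt s2e by auto
  qed
  moreover have "suffix s2' v"
  proof -
    obtain zs where "v @ [c] = zs @ s2' @ [c']" using s2(1) s2e unfolding suffix_def by auto
    hence "v = zs @ s2'" by (metis append_assoc butlast_snoc)
    thus ?thesis unfolding suffix_def by auto
  qed
  ultimately have "sublist s1 v" by (meson prefix_imp_sublist suffix_imp_sublist sublist_order.order_trans)
  thus False using s1(2) by simp
qed

lemma card_pal_snoc: "card (pal_factors (v @ [c])) \<le> Suc (card (pal_factors v))"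
proof -
  let ?D = "pal_factors (v @ [c]) - pal_factors v"
  have fD: "finite ?D" using finite_pal_factors by auto
  have "\<forall>x\<in>?D. \<forall>y\<in>?D. x = y"
    by (metis nat_le_linear new_pal_unique)
  hence "card ?D \<le> 1" using card_le_Suc0_iff_eq[OF fD] by simp
  moreover have "pal_factors (v @ [c]) = pal_factors v \<union> ?D" using pal_factors_mono[of v c] by auto
  moreover have "card (pal_factors v \<union> ?D) \<le> card (pal_factors v) + card ?D" by (rule card_Un_le)
  ultimately have "card (pal_factors (v @ [c])) \<le> card (pal_factors v) + card ?D" by metis
  thus ?thesis using \<open>card ?D \<le> 1\<close> by linarith
qed

definition seg :: "(nat \<Rightarrow> 'a) \<Rightarrow> nat \<Rightarrow> nat \<Rightarrow> 'a list" where
  "seg u i n = map u [i..<i+n]"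

lemma length_seg[simp]: "length (seg u i n) = n"
  by (simp add: seg_def)

lemma nth_seg[simp]: "t < n \<Longrightarrow> seg u i n ! t = u (i + t)"
  by (simp add: seg_def)

lemma seg_eq_iff: "seg u a n = seg u b n \<longleftrightarrow> (\<forall>t<n. u (a+t) = u (b+t))"
  by (simp add: list_eq_iff_nth_eq)

lemma seg_rev_iff: "seg u a n = rev (seg u b n) \<longleftrightarrow> (\<forall>t<n. u (a+t) = u (b+n-1-t))"
proof -
  have "\<And>t. t < n \<Longrightarrow> rev (seg u b n) ! t = u (b+n-1-t)"
    by (simp add: rev_nth)
  thus ?thesis by (simp add: list_eq_iff_nth_eq)
qed

lemma pal_seg_iff: "palindrome (seg u a n) \<longleftrightarrow> (\<forall>t<n. u (a+t) = u (a+n-1-t))"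
  unfolding palindrome_def using seg_rev_iff[of u a n a] by metis

lemma factor_iff: "factor w u \<longleftrightarrow> (\<exists>i. w = seg u i (length w))"
  by (simp add: factor_def seg_def)

lemma seg_add: "seg u i (m + n) = seg u i m @ seg u (i+m) n"
proof -
  have "[i..<i+m+n] = [i..<i+m] @ [i+m..<i+m+n]" using upt_add_eq_append[of i "i+m" n] by simp
  thus ?thesis by (simp add: seg_def add.assoc)
qed

lemma seg_Suc: "seg u i (Suc n) = seg u i n @ [u (i+n)]"
  by (simp add: seg_def)

lemma sublist_seg:
  assumes "i \<le> j" "j + k \<le> i + n"
  shows "sublist (seg u j k) (seg u i n)"
proof -
  have "seg u i n = seg u i (j - i) @ seg u j k @ seg u (j+k) (i + n - (j+k))"
    using assms seg_add[of u i "j-i" "k + (i+n-(j+k))"] seg_add[of u j k "i+n-(j+k)"]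
    by simp
  thus ?thesis by (metis sublist_appendI)
qed

lemma suffix_seg0:
  assumes "suffix s (seg u 0 m)"
  shows "s = seg u (m - length s) (length s)"
proof -
  obtain zs where e: "seg u 0 m = zs @ s" using assms unfolding suffix_def by auto
  hence "s = drop (length zs) (seg u 0 m)" by simp
  moreover have "length zs = m - length s" using arg_cong[OF e, of length] by simp
  moreover have "length s \<le> m" using arg_cong[OF e, of length] by simp
  ultimately show ?thesis using e
    by (simp add: seg_def drop_map)
qed

lemma pal_factors_Nil: "pal_factors [] = {[]}"
  by (auto simp: pal_factors_def palindrome_def)

lemma POS:
  assumes fd: "finite_defect u"
  shows "\<exists>N. \<forall>n\<ge>N. \<exists>k. k \<le> Suc n \<and> palindrome (seg u (Suc n - k) k) \<and>
            (\<forall>j. j + k \<le> n \<longrightarrow> seg u j k \<noteq> seg u (Suc n - k) k)"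
proof -
  obtain B where B: "\<And>w. factor w u \<Longrightarrow> defect w \<le> B" using fd unfolding finite_defect_def by auto
  define g where "g n = card (pal_factors (seg u 0 n))" for n
  have gS: "g (Suc n) \<le> Suc (g n)" for n
    unfolding g_def seg_Suc using card_pal_snoc by simp
  have gle: "g n \<le> Suc n" for n
  proof (induction n)
    case 0 thus ?case by (simp add: g_def seg_def pal_factors_Nil)
  next
    case (Suc n) thus ?case using gS[of n] by simp
  qed
  define h where "h n = Suc n - g n" for n
  have hmono: "h n \<le> h (Suc n)" for n using gS[of n] gle[of n] unfolding h_def by simp
  have hB: "h n \<le> B" for n
  proof -
    have "factor (seg u 0 n) u" by (auto simp: factor_iff)
    hence "defect (seg u 0 n) \<le> B" by (rule B)
    thus ?thesis by (simp add: h_def defect_def g_def)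
  qed
  have "range h \<subseteq> {..B}" using hB by auto
  hence fin: "finite (range h)" using finite_subset by blast
  obtain N where N: "h N = Max (range h)" using Max_in[OF fin] by auto
  have hmono': "m \<le> n \<Longrightarrow> h m \<le> h n" for m n
    using hmono by (rule lift_Suc_mono_le)
  show ?thesis
  proof (rule exI[of _ N], intro allI impI)
    fix n assume nN: "N \<le> n"
    have "h (Suc n) \<le> h N" using N fin by simp
    moreover have "h N \<le> h n" using hmono' nN by blast
    ultimately have "h (Suc n) \<le> h n" by simp
    hence "Suc (Suc n) - g (Suc n) \<le> Suc n - g n" by (simp add: h_def)
    hence gg: "g (Suc n) = Suc (g n)" using gS[of n] gle[of n] gle[of "Suc n"]
      by linarith
    let ?v = "seg u 0 n"
    have sS: "seg u 0 (Suc n) = ?v @ [u n]" by (simp add: seg_Suc)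
    have "pal_factors (?v @ [u n]) - pal_factors ?v \<noteq> {}"
    proof
      assume "pal_factors (?v @ [u n]) - pal_factors ?v = {}"
      hence "pal_factors (?v @ [u n]) \<subseteq> pal_factors ?v" by (simp only: Diff_eq_empty_iff)
      hence "pal_factors (?v @ [u n]) = pal_factors ?v" using pal_factors_mono[of ?v "u n"] by (rule subset_antisym)
      thus False using gg unfolding g_def sS by simp
    qed
    then obtain s where s: "s \<in> pal_factors (?v @ [u n]) - pal_factors ?v" by blast
    from new_pal_suffix[OF s] have s1: "suffix s (seg u 0 (Suc n))" "\<not> sublist s ?v" "palindrome s"
      using sS by auto
    define k where "k = length s"
    have se: "s = seg u (Suc n - k) k" using suffix_seg0[OF s1(1)] k_def by simp
    have kl: "k \<le> Suc n" using suffix_length_le[OF s1(1)] k_def by simp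
    show "\<exists>k. k \<le> Suc n \<and> palindrome (seg u (Suc n - k) k) \<and>
            (\<forall>j. j + k \<le> n \<longrightarrow> seg u j k \<noteq> seg u (Suc n - k) k)"
    proof (intro exI conjI allI impI)
      show "k \<le> Suc n" by (rule kl)
      show "palindrome (seg u (Suc n - k) k)" using s1(3) se by simp
      fix j assume "j + k \<le> n"
      hence "sublist (seg u j k) ?v" using sublist_seg[of 0 j k n u] by simp
      thus "seg u j k \<noteq> seg u (Suc n - k) k" using s1(2) se by auto
    qed
  qed
qed

lemma pal_rev_iff: "palindrome (rev x) \<longleftrightarrow> palindrome x"
  unfolding palindrome_def by (metis rev_rev_ident)

lemma lemC:
  assumes P: "\<forall>n\<ge>N. \<exists>k. k \<le> Suc n \<and> palindrome (seg u (Suc n - k) k) \<and>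
            (\<forall>j. j + k \<le> n \<longrightarrow> seg u j k \<noteq> seg u (Suc n - k) k)"
    and mN: "N < m" and np: "\<not> palindrome (seg u i m)"
  shows "\<exists>i' k. (seg u i' m = seg u i m \<or> seg u i' m = rev (seg u i m)) \<and> k < m \<and>
     palindrome (seg u (i'+m-k) k) \<and> (\<forall>j. j + k \<le> i' + m - 1 \<longrightarrow> seg u j k \<noteq> seg u (i'+m-k) k)"
proof -
  define Q where "Q x \<longleftrightarrow> seg u x m = seg u i m \<or> seg u x m = rev (seg u i m)" for x
  have Qi: "Q i" by (simp add: Q_def)
  define i0 where "i0 = (LEAST x. Q x)"
  have Q0: "Q i0" using LeastI[of Q i, OF Qi] i0_def by simp
  have min: "\<And>x. x < i0 \<Longrightarrow> \<not> Q x" using not_less_Least i0_def by auto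
  have "N \<le> i0 + m - 1" using mN by simp
  from P[rule_format, OF this] obtain k where k: "k \<le> Suc (i0+m-1)"
    "palindrome (seg u (Suc (i0+m-1) - k) k)"
    "\<forall>j. j + k \<le> i0+m-1 \<longrightarrow> seg u j k \<noteq> seg u (Suc (i0+m-1) - k) k" by blast
  have sm: "Suc (i0+m-1) = i0 + m" using mN by simp
  have np0: "\<not> palindrome (seg u i0 m)" using Q0 np pal_rev_iff unfolding Q_def by metis
  have "k < m"
  proof (rule ccontr)
    assume nk: "\<not> k < m"
    show False
    proof (cases "k = m")
      case True
      thus False using k(2) sm np0 by simp
    next
      case False
      hence km: "m < k" using nk by simp
      define j where "j = i0 + m - k"
      have jl: "j < i0" using km k(1) sm by (simp add: j_def)
      have pk: "\<And>t. t < k \<Longrightarrow> u (j + t) = u (j + k - 1 - t)"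
        using k(2) sm unfolding pal_seg_iff j_def by simp
      have "seg u j m = rev (seg u i0 m)" unfolding seg_rev_iff
      proof (intro allI impI)
        fix t assume t: "t < m"
        have "j + k - 1 - t = i0 + m - 1 - t" using km k(1) sm by (simp add: j_def)
        thus "u (j + t) = u (i0 + m - 1 - t)" using pk[of t] t km by simp
      qed
      hence "Q j" using Q0 unfolding Q_def by auto
      thus False using min jl by blast
    qed
  qed
  thus ?thesis using Q0 k sm unfolding Q_def by (intro exI[of _ i0] exI[of _ k]) auto
qed

lemma lemG0:
  assumes lm: "l < m"
    and y: "seg u (i+m-l) l = seg u i l \<or> seg u (i+m-l) l = rev (seg u i l)"
    and inner: "\<forall>j. 0 < j \<and> j < m - l \<longrightarrow> seg u (i+j) l \<noteq> seg u i l \<and> seg u (i+j) l \<noteq> rev (seg u i l)"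
    and km: "k < m" and pal: "palindrome (seg u (i+m-k) k)"
    and new: "\<forall>j. j + k \<le> i + m - 1 \<longrightarrow> seg u j k \<noteq> seg u (i+m-k) k"
  shows False
proof -
  have P: "u (i+m-k+t) = u (i+m-1-t)" if t: "t < k" for t
  proof -
    have "u (i+m-k+t) = u (i+m-k+k-1-t)" using pal t unfolding pal_seg_iff by simp
    moreover have "i+m-k+k-1-t = i+m-1-t" using km by simp
    ultimately show ?thesis by simp
  qed
  show False
  proof (cases "k \<le> l")
    case True
    from y show False
    proof
      assume e: "seg u (i+m-l) l = seg u i l"
      hence E: "\<And>t. t < l \<Longrightarrow> u (i+m-l+t) = u (i+t)" by (simp add: seg_eq_iff)
      have "seg u (i+l-k) k = seg u (i+m-k) k" unfolding seg_eq_iff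
      proof (intro allI impI)
        fix t assume t: "t < k"
        have "u (i+m-l+(l-k+t)) = u (i+(l-k+t))" using E[of "l-k+t"] t True by simp
        moreover have "i+m-l+(l-k+t) = i+m-k+t" using True lm t by simp
        moreover have "i+(l-k+t) = i+l-k+t" using True by simp
        ultimately show "u (i+l-k+t) = u (i+m-k+t)" by simp
      qed
      moreover have "(i+l-k) + k \<le> i+m-1" using True lm by simp
      ultimately show False using new by auto
    next
      assume e: "seg u (i+m-l) l = rev (seg u i l)"
      hence E: "\<And>t. t < l \<Longrightarrow> u (i+m-l+t) = u (i+l-1-t)" by (simp add: seg_rev_iff)
      have "seg u i k = seg u (i+m-k) k" unfolding seg_eq_iff
      proof (intro allI impI)
        fix t assume t: "t < k"
        have "u (i+m-l+(l-1-t)) = u (i+l-1-(l-1-t))" using E[of "l-1-t"] t True by simp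
        moreover have "i+m-l+(l-1-t) = i+m-1-t" using True lm t by simp
        moreover have "i+l-1-(l-1-t) = i+t" using True t by simp
        ultimately have "u (i+m-1-t) = u (i+t)" by simp
        thus "u (i+t) = u (i+m-k+t)" using P[OF t] by simp
      qed
      moreover have "i + k \<le> i+m-1" using km by simp
      ultimately show False using new by auto
    qed
  next
    case False
    define j where "j = m - k"
    have j: "0 < j" "j < m - l" using False km by (auto simp: j_def)
    have R: "seg u (i+j) l = rev (seg u (i+m-l) l)" unfolding seg_rev_iff
    proof (intro allI impI)
      fix t assume t: "t < l"
      have "i+j+t = i+m-k+t" using km by (simp add: j_def)
      moreover have "i+m-l+l-1-t = i+m-1-t" using lm by simp
      ultimately show "u (i+j+t) = u (i+m-l+l-1-t)" using P[of t] t False by simp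
    qed
    from y have "seg u (i+j) l = rev (seg u i l) \<or> seg u (i+j) l = seg u i l" using R by auto
    thus False using inner j by blast
  qed
qed

lemma lemG:
  assumes P: "\<forall>n\<ge>N. \<exists>k. k \<le> Suc n \<and> palindrome (seg u (Suc n - k) k) \<and>
            (\<forall>j. j + k \<le> n \<longrightarrow> seg u j k \<noteq> seg u (Suc n - k) k)"
    and mN: "N < m" and lm: "l < m"
    and y: "seg u (a+m-l) l = seg u a l \<or> seg u (a+m-l) l = rev (seg u a l)"
    and inner: "\<forall>j. 0 < j \<and> j < m - l \<longrightarrow> seg u (a+j) l \<noteq> seg u a l \<and> seg u (a+j) l \<noteq> rev (seg u a l)"
  shows "palindrome (seg u a m)"
proof (rule ccontr)
  assume np: "\<not> palindrome (seg u a m)"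
  from lemC[OF P mN np] obtain i' k where ik:
    "seg u i' m = seg u a m \<or> seg u i' m = rev (seg u a m)" "k < m"
    "palindrome (seg u (i'+m-k) k)" "\<forall>j. j + k \<le> i' + m - 1 \<longrightarrow> seg u j k \<noteq> seg u (i'+m-k) k"
    by blast
  from ik(1) show False
  proof
    assume e: "seg u i' m = seg u a m"
    hence E: "\<And>t. t < m \<Longrightarrow> u (i'+t) = u (a+t)" by (simp add: seg_eq_iff)
    have sub: "seg u (i'+t) l' = seg u (a+t) l'" if tl: "t + l' \<le> m" for t l'
      unfolding seg_eq_iff
    proof (intro allI impI)
      fix s assume s: "s < l'"
      show "u (i'+t+s) = u (a+t+s)" using E[of "t+s"] s tl by (simp add: add.assoc)
    qed
    have y': "seg u (i'+m-l) l = seg u i' l \<or> seg u (i'+m-l) l = rev (seg u i' l)"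
      using y sub[of "m-l" l] sub[of 0 l] lm by simp
    have inner': "\<forall>j. 0 < j \<and> j < m - l \<longrightarrow> seg u (i'+j) l \<noteq> seg u i' l \<and> seg u (i'+j) l \<noteq> rev (seg u i' l)"
    proof (intro allI impI)
      fix j assume j: "0 < j \<and> j < m - l"
      have "j + l \<le> m" using j lm by linarith
      hence "seg u (i'+j) l = seg u (a+j) l" by (rule sub)
      moreover have "seg u i' l = seg u a l" using sub[of 0 l] lm by simp
      ultimately show "seg u (i'+j) l \<noteq> seg u i' l \<and> seg u (i'+j) l \<noteq> rev (seg u i' l)"
        using inner j by simp
    qed
    show False using lemG0[OF lm y' inner' ik(2) ik(3) ik(4)] .
  next
    assume e: "seg u i' m = rev (seg u a m)"
    hence E: "\<And>t. t < m \<Longrightarrow> u (i'+t) = u (a+m-1-t)" by (simp add: seg_rev_iff)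
    have sub: "seg u (i'+t) l' = rev (seg u (a+m-t-l') l')" if tl: "t + l' \<le> m" for t l'
      unfolding seg_rev_iff
    proof (intro allI impI)
      fix s assume s: "s < l'"
      have "u (i'+t+s) = u (a+m-1-(t+s))" using E[of "t+s"] s tl by (simp add: add.assoc)
      moreover have "a+m-t-l'+l'-1-s = a+m-1-(t+s)" using s tl by simp
      ultimately show "u (i'+t+s) = u (a+m-t-l'+l'-1-s)" by simp
    qed
    let ?X = "seg u a l"
    have x': "seg u i' l = rev (seg u (a+m-l) l)" using sub[of 0 l] lm by simp
    have y'': "seg u (i'+m-l) l = rev ?X" using sub[of "m-l" l] lm by simp
    have y': "seg u (i'+m-l) l = seg u i' l \<or> seg u (i'+m-l) l = rev (seg u i' l)"
      using y x' y'' by auto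
    have XX: "{seg u i' l, rev (seg u i' l)} = {?X, rev ?X}" using y x' by auto
    have inner': "\<forall>j. 0 < j \<and> j < m - l \<longrightarrow> seg u (i'+j) l \<noteq> seg u i' l \<and> seg u (i'+j) l \<noteq> rev (seg u i' l)"
    proof (intro allI impI)
      fix j assume j: "0 < j \<and> j < m - l"
      have "j + l \<le> m" using j lm by linarith
      hence r: "seg u (i'+j) l = rev (seg u (a+m-j-l) l)" by (rule sub)
      have "0 < m - j - l" "m - j - l < m - l" using j by auto
      hence "seg u (a+(m-j-l)) l \<noteq> ?X \<and> seg u (a+(m-j-l)) l \<noteq> rev ?X" using inner by blast
      moreover have "a+(m-j-l) = a+m-j-l" using j lm by linarith
      ultimately have S: "seg u (a+m-j-l) l \<noteq> ?X \<and> seg u (a+m-j-l) l \<noteq> rev ?X" by simp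
      have "seg u (i'+j) l \<noteq> ?X" using S r by (metis rev_rev_ident)
      moreover have "seg u (i'+j) l \<noteq> rev ?X" using S r by (metis rev_rev_ident)
      ultimately have "seg u (i'+j) l \<notin> {?X, rev ?X}" by simp
      thus "seg u (i'+j) l \<noteq> seg u i' l \<and> seg u (i'+j) l \<noteq> rev (seg u i' l)" using XX by blast
    qed
    show False using lemG0[OF lm y' inner' ik(2) ik(3) ik(4)] .
  qed
qed

lemma walk_single: "x \<in> V \<Longrightarrow> walk V E [x]"
  by (simp add: walk_def)

lemma walk_snoc:
  assumes w: "walk V E p" and e: "{last p, y} \<in> E" and y: "y \<in> V"
  shows "walk V E (p @ [y])"
  unfolding walk_def
proof (intro conjI allI impI)
  show "p @ [y] \<noteq> []" by simp
  show "set (p @ [y]) \<subseteq> V" using w y by (auto simp: walk_def)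
  fix i assume i: "Suc i < length (p @ [y])"
  show "{(p @ [y]) ! i, (p @ [y]) ! Suc i} \<in> E"
  proof (cases "Suc i < length p")
    case True
    thus ?thesis using w by (auto simp: walk_def nth_append)
  next
    case False
    hence ii: "i = length p - 1" "p \<noteq> []" using i w by (auto simp: walk_def)
    hence "(p @ [y]) ! i = last p" by (simp add: nth_append last_conv_nth)
    moreover have "(p @ [y]) ! Suc i = y" using ii by (simp add: nth_append)
    ultimately show ?thesis using e by simp
  qed
qed

lemma walk_rev:
  assumes w: "walk V E p"
  shows "walk V E (rev p)"
  unfolding walk_def
proof (intro conjI allI impI)
  show "rev p \<noteq> []" using w by (simp add: walk_def)
  show "set (rev p) \<subseteq> V" using w by (simp add: walk_def)
  fix i assume i: "Suc i < length (rev p)"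
  let ?n = "length p"
  have "Suc (?n - 2 - i) < ?n" using i by simp
  hence "{p ! (?n - 2 - i), p ! Suc (?n - 2 - i)} \<in> E" using w by (simp add: walk_def)
  moreover have "rev p ! i = p ! Suc (?n - 2 - i)" using i
    by (simp add: rev_nth Suc_diff_Suc numeral_2_eq_2)
  moreover have "rev p ! Suc i = p ! (?n - 2 - i)" using i
    by (simp add: rev_nth numeral_2_eq_2)
  ultimately show "{rev p ! i, rev p ! Suc i} \<in> E" by (simp add: insert_commute)
qed

lemma cycle_neighbors:
  assumes w: "walk V E p" and dp: "distinct p" and l3: "length p \<ge> 3"
    and cl: "{last p, hd p} \<in> E" and k: "k < length p"
  shows "\<exists>d1 d2. d1 \<in> set p \<and> d2 \<in> set p \<and> d1 \<noteq> d2 \<and> {p!k, d1} \<in> E \<and> {p!k, d2} \<in> E"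
proof -
  let ?n = "length p"
  have W: "\<And>i. Suc i < ?n \<Longrightarrow> {p ! i, p ! Suc i} \<in> E" using w by (simp add: walk_def)
  have hd: "hd p = p ! 0" using l3 by (cases p) auto
  have "p \<noteq> []" using l3 by auto
  hence lst: "last p = p ! (?n - 1)" by (simp add: last_conv_nth)
  have dist: "\<And>i j. i < ?n \<Longrightarrow> j < ?n \<Longrightarrow> i \<noteq> j \<Longrightarrow> p ! i \<noteq> p ! j"
    using dp by (simp add: nth_eq_iff_index_eq)
  show ?thesis
  proof (cases "k = 0")
    case True
    have "{p!k, p!1} \<in> E" using W[of 0] l3 True by simp
    moreover have "{p!k, p!(?n-1)} \<in> E" using cl hd lst True by (simp add: insert_commute)
    moreover have "p!1 \<noteq> p!(?n-1)" using dist[of 1 "?n-1"] l3 by simp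
    ultimately show ?thesis using l3 by (intro exI[of _ "p!1"] exI[of _ "p!(?n-1)"]) auto
  next
    case False
    show ?thesis
    proof (cases "k = ?n - 1")
      case True
      have "{p!(?n-2), p!Suc (?n-2)} \<in> E" using W[of "?n-2"] l3 by simp
      moreover have "Suc (?n-2) = k" using True l3 by simp
      ultimately have e1: "{p!k, p!(?n-2)} \<in> E" by (simp add: insert_commute)
      have e2: "{p!k, p!0} \<in> E" using cl hd lst True by simp
      have "p!(?n-2) \<noteq> p!0" using dist[of "?n-2" 0] l3 \<open>p \<noteq> []\<close> by simp
      moreover have "p!(?n-2) \<in> set p" "p!0 \<in> set p" using l3 by (auto intro!: nth_mem)
      ultimately show ?thesis using e1 e2 by blast
    next
      case False2: False
      have e1: "{p!(k-1), p!k} \<in> E" using W[of "k-1"] k False by simp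
      have e2: "{p!k, p!(Suc k)} \<in> E" using W[of k] k False2 by simp
      have "p!(k-1) \<noteq> p!(Suc k)" using dist[of "k-1" "Suc k"] k False False2 by simp
      moreover have "p!(k-1) \<in> set p" "p!(Suc k) \<in> set p" using k False2 by (auto intro!: nth_mem)
      moreover have "{p!k, p!(k-1)} \<in> E" using e1 by (simp add: insert_commute)
      ultimately show ?thesis using e2 by blast
    qed
  qed
qed

lemma tree_from_walk:
  fixes V :: "nat \<Rightarrow> 'v" and VG :: "'v set" and EG :: "'v set set"
  assumes fin: "finite VG" and ne: "VG \<noteq> {}"
    and Esub: "EG \<subseteq> {{x, y} | x y. x \<in> VG \<and> y \<in> VG \<and> x \<noteq> y}"
    and a: "\<And>t. V t \<in> VG"
    and b: "\<And>x. x \<in> VG \<Longrightarrow> \<exists>t. V t = x"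
    and c: "\<And>t. V t \<noteq> V (Suc t) \<Longrightarrow> {V t, V (Suc t)} \<in> EG"
    and d: "\<And>e. e \<in> EG \<Longrightarrow> \<exists>t. V t \<noteq> V (Suc t) \<and> e = {V t, V (Suc t)}"
    and e: "\<And>s t. s < t \<Longrightarrow> V s = V t \<Longrightarrow> V (Suc s) \<noteq> V s \<Longrightarrow>
              (\<forall>r. s < r \<and> r < t \<longrightarrow> V r \<noteq> V s) \<Longrightarrow> V (Suc s) = V (t - 1)"
  shows "is_tree VG EG"
proof -
  define R where "R x y \<longleftrightarrow> (\<exists>p. walk VG EG p \<and> hd p = x \<and> last p = y)" for x y
  have Rk: "R (V s) (V (s + k))" for s k
  proof (induction k)
    case 0
    show ?case unfolding R_def using walk_single[OF a[of s]] by (intro exI[of _ "[V s]"]) auto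
  next
    case (Suc k)
    then obtain p where p: "walk VG EG p" "hd p = V s" "last p = V (s + k)" unfolding R_def by auto
    show ?case
    proof (cases "V (s + k) = V (Suc (s + k))")
      case True thus ?thesis using Suc by simp
    next
      case False
      have "walk VG EG (p @ [V (Suc (s+k))])" using walk_snoc[OF p(1) _ a] c[OF False] p(3) by simp
      moreover have "p \<noteq> []" using p(1) by (simp add: walk_def)
      ultimately show ?thesis unfolding R_def using p by (intro exI[of _ "p @ [V (Suc (s+k))]"]) auto
    qed
  qed
  have Rsym: "R x y \<Longrightarrow> R y x" for x y
  proof -
    assume "R x y"
    then obtain p where p: "walk VG EG p" "hd p = x" "last p = y" unfolding R_def by auto
    have "p \<noteq> []" using p(1) by (simp add: walk_def)
    thus "R y x" unfolding R_def using walk_rev[OF p(1)] p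
      by (intro exI[of _ "rev p"]) (auto simp: hd_rev last_rev)
  qed
  have conn: "connected_graph VG EG"
    unfolding connected_graph_def R_def[symmetric]
  proof (intro ballI)
    fix x y assume "x \<in> VG" "y \<in> VG"
    then obtain s t where st: "V s = x" "V t = y" using b by blast
    show "R x y"
    proof (cases "s \<le> t")
      case True thus ?thesis using Rk[of s "t - s"] st by simp
    next
      case False thus ?thesis using Rk[of t "s - t"] st Rsym by simp
    qed
  qed
  define f where "f x = (LEAST t. V t = x)" for x
  have key: "V t \<noteq> V (Suc t) \<Longrightarrow> \<exists>x. {V t, V (Suc t)} = {x, V (f x - 1)} \<and> f (V (f x - 1)) < f x" for t
  proof (induction t rule: less_induct)
    case (less t)
    have fle: "f (V (Suc t)) \<le> Suc t" unfolding f_def by (rule Least_le) simp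
    show ?case
    proof (cases "f (V (Suc t)) = Suc t")
      case True
      have "f (V t) \<le> t" unfolding f_def by (rule Least_le) simp
      thus ?thesis using True by (intro exI[of _ "V (Suc t)"]) (auto simp: insert_commute)
    next
      case False
      hence ft: "f (V (Suc t)) \<le> t" using fle by simp
      have Vf: "V (f (V (Suc t))) = V (Suc t)" unfolding f_def by (rule LeastI) simp
      define P where "P s \<longleftrightarrow> s \<le> t \<and> V s = V (Suc t)" for s
      define s where "s = (GREATEST s. P s)"
      have Pf: "P (f (V (Suc t)))" using ft Vf by (simp add: P_def)
      have bnd: "\<And>y. P y \<Longrightarrow> y \<le> t" by (simp add: P_def)
      have Ps: "P s" unfolding s_def using GreatestI_nat[of P "f (V (Suc t))" t, OF Pf bnd] .
      have smax: "\<And>r. P r \<Longrightarrow> r \<le> s" unfolding s_def using Greatest_le_nat[of P _ t] bnd by blast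
      have st: "s < t" using Ps less.prems by (auto simp: P_def le_less)
      have n1: "V (Suc s) \<noteq> V s"
      proof
        assume "V (Suc s) = V s"
        hence "P (Suc s)" using Ps st by (simp add: P_def)
        thus False using smax by fastforce
      qed
      have n2: "\<forall>r. s < r \<and> r < Suc t \<longrightarrow> V r \<noteq> V s"
      proof (intro allI impI)
        fix r assume r: "s < r \<and> r < Suc t"
        show "V r \<noteq> V s"
        proof
          assume "V r = V s"
          hence "P r" using Ps r by (simp add: P_def)
          thus False using smax r by fastforce
        qed
      qed
      have "s < Suc t" using st by simp
      from e[OF this _ n1 n2] Ps have vs: "V (Suc s) = V t" by (simp add: P_def)
      from less.IH[OF st not_sym[OF n1]] obtain x where x: "{V s, V (Suc s)} = {x, V (f x - 1)}" "f (V (f x - 1)) < f x"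
        by blast
      have "{V t, V (Suc t)} = {V s, V (Suc s)}" using vs Ps by (auto simp: P_def)
      thus ?thesis using x by auto
    qed
  qed
  have edge_par: "\<And>c d. {c, d} \<in> EG \<Longrightarrow> d = V (f c - 1) \<or> f c < f d"
  proof -
    fix c d assume "{c, d} \<in> EG"
    from d[OF this] obtain t where t: "V t \<noteq> V (Suc t)" "{c, d} = {V t, V (Suc t)}" by blast
    from key[OF t(1)] obtain x where x: "{V t, V (Suc t)} = {x, V (f x - 1)}" "f (V (f x - 1)) < f x" by blast
    have cd: "{c, d} = {x, V (f x - 1)}" using t(2) x(1) by simp
    show "d = V (f c - 1) \<or> f c < f d"
    proof (cases "x = c")
      case True thus ?thesis using cd by (auto simp: doubleton_eq_iff)
    next
      case False
      hence "x = d \<and> c = V (f x - 1)" using cd by (auto simp: doubleton_eq_iff)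
      thus ?thesis using x(2) by auto
    qed
  qed
  have nocyc: "\<not> has_cycle VG EG"
  proof
    assume "has_cycle VG EG"
    then obtain p where p: "walk VG EG p" "distinct p" "length p \<ge> 3" "{last p, hd p} \<in> EG"
      unfolding has_cycle_def by blast
    have fp: "finite (f ` set p)" by simp
    have nep: "f ` set p \<noteq> {}" using p(3) by auto
    obtain c where c: "c \<in> set p" "f c = Max (f ` set p)" using Max_in[OF fp nep] by auto
    then obtain k where k: "k < length p" "p ! k = c" by (auto simp: in_set_conv_nth)
    from cycle_neighbors[OF p(1) p(2) p(3) p(4) k(1)] obtain d1 d2 where
      dd: "d1 \<in> set p" "d2 \<in> set p" "d1 \<noteq> d2" "{p!k, d1} \<in> EG" "{p!k, d2} \<in> EG" by blast
    have "f d1 \<le> f c" "f d2 \<le> f c" using dd(1,2) c(2) fp by auto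
    hence "d1 = V (f c - 1)" "d2 = V (f c - 1)" using edge_par dd(4,5) k(2) by (auto simp: not_less[symmetric])
    thus False using dd(3) by simp
  qed
  show ?thesis unfolding is_tree_def using fin ne Esub conn nocyc by blast
qed

lemma tree_from_occ:
  fixes Occ :: "nat set" and inn out :: "nat \<Rightarrow> 'v" and VG :: "'v set" and EG :: "'v set set"
  assumes ne: "Occ \<noteq> {}" and pos: "0 \<notin> Occ"
    and cons: "\<And>p p'. p \<in> Occ \<Longrightarrow> p' \<in> Occ \<Longrightarrow> p < p' \<Longrightarrow> (\<forall>r. p < r \<and> r < p' \<longrightarrow> r \<notin> Occ) \<Longrightarrow> out p = inn p'"
    and exc: "\<And>p p'. p \<in> Occ \<Longrightarrow> p' \<in> Occ \<Longrightarrow> p < p' \<Longrightarrow> inn p = out p' \<Longrightarrow>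
       (\<forall>r\<in>Occ. p < r \<and> r \<le> p' \<longrightarrow> inn r \<noteq> inn p) \<Longrightarrow>
       (\<forall>r\<in>Occ. p \<le> r \<and> r < p' \<longrightarrow> out r \<noteq> inn p) \<Longrightarrow> out p = inn p'"
    and fin: "finite VG" and neV: "VG \<noteq> {}"
    and Esub: "EG \<subseteq> {{x, y} | x y. x \<in> VG \<and> y \<in> VG \<and> x \<noteq> y}"
    and a: "\<And>p. p \<in> Occ \<Longrightarrow> inn p \<in> VG \<and> out p \<in> VG"
    and b: "\<And>x. x \<in> VG \<Longrightarrow> \<exists>p\<in>Occ. inn p = x"
    and c: "\<And>p. p \<in> Occ \<Longrightarrow> inn p \<noteq> out p \<Longrightarrow> {inn p, out p} \<in> EG"
    and d: "\<And>e. e \<in> EG \<Longrightarrow> \<exists>p\<in>Occ. inn p \<noteq> out p \<and> e = {inn p, out p}"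
  shows "is_tree VG EG"
proof -
  define G where "G t = (GREATEST p. p \<in> Occ \<and> p \<le> t)" for t
  define V where "V t = (if \<exists>p\<in>Occ. p \<le> t then out (G t) else inn (LEAST p. p \<in> Occ))" for t
  have GI: "G t \<in> Occ \<and> G t \<le> t" if "p \<in> Occ" "p \<le> t" for p t
    unfolding G_def by (rule GreatestI_nat[of _ p t]) (use that in auto)
  have Gmax: "q \<le> G t" if "q \<in> Occ" "q \<le> t" for q t
    unfolding G_def by (rule Greatest_le_nat[of _ q t]) (use that in auto)
  obtain p0 where p0: "p0 \<in> Occ" using ne by blast
  have LI: "(LEAST p. p \<in> Occ) \<in> Occ" using LeastI[of "\<lambda>p. p \<in> Occ", OF p0] .
  have Vp: "V p = out p" if "p \<in> Occ" for p
  proof -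
    have "G p = p" using GI[OF that le_refl] Gmax[OF that le_refl] by simp
    thus ?thesis using that unfolding V_def by auto
  qed
  have Vpm: "V (p - 1) = inn p" if pO: "p \<in> Occ" for p
  proof (cases "\<exists>q\<in>Occ. q \<le> p - 1")
    case True
    then obtain q where q: "q \<in> Occ" "q \<le> p - 1" by blast
    have g: "G (p-1) \<in> Occ" "G (p-1) \<le> p - 1" using GI[OF q] by auto
    have pp: "0 < p" using pO pos by (cases p) auto
    have "out (G (p-1)) = inn p"
    proof (rule cons[OF g(1) pO])
      show "G (p-1) < p" using g(2) pp by simp
      show "\<forall>r. G (p - 1) < r \<and> r < p \<longrightarrow> r \<notin> Occ"
        using Gmax[of _ "p-1"] by force
    qed
    thus ?thesis using True unfolding V_def by simp
  next
    case False
    have "(LEAST p. p \<in> Occ) = p"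
    proof (rule Least_equality)
      show "p \<in> Occ" by (rule pO)
      fix y assume "y \<in> Occ" thus "p \<le> y" using False by force
    qed
    thus ?thesis using False unfolding V_def by simp
  qed
  have Vchg: "Suc t \<in> Occ" if "V t \<noteq> V (Suc t)" for t
  proof (rule ccontr)
    assume nO: "Suc t \<notin> Occ"
    have eqP: "(\<lambda>p. p \<in> Occ \<and> p \<le> Suc t) = (\<lambda>p. p \<in> Occ \<and> p \<le> t)"
      using nO le_Suc_eq by fastforce
    have "G (Suc t) = G t" unfolding G_def eqP ..
    moreover have "(\<exists>p\<in>Occ. p \<le> Suc t) = (\<exists>p\<in>Occ. p \<le> t)" using eqP by metis
    ultimately have "V (Suc t) = V t" unfolding V_def by simp
    thus False using that by simp
  qed
  have Vin: "\<exists>p\<in>Occ. V t = inn p \<or> V t = out p" for t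
  proof (cases "\<exists>p\<in>Occ. p \<le> t")
    case True
    then obtain q where "q \<in> Occ" "q \<le> t" by blast
    thus ?thesis using True GI unfolding V_def by auto
  next
    case False thus ?thesis using LI unfolding V_def by auto
  qed
  show ?thesis
  proof (rule tree_from_walk[of VG EG V])
    show "finite VG" "VG \<noteq> {}" "EG \<subseteq> {{x, y} |x y. x \<in> VG \<and> y \<in> VG \<and> x \<noteq> y}"
      using fin neV Esub by auto
    show "V t \<in> VG" for t using Vin[of t] a by auto
    show "\<exists>t. V t = x" if xV: "x \<in> VG" for x
    proof -
      obtain p where "p \<in> Occ" "inn p = x" using b[OF xV] by blast
      thus ?thesis using Vpm by blast
    qed
    show "{V t, V (Suc t)} \<in> EG" if ch: "V t \<noteq> V (Suc t)" for t
    proof -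
      have O: "Suc t \<in> Occ" using Vchg[OF ch] .
      have "V t = inn (Suc t)" using Vpm[OF O] by simp
      moreover have "V (Suc t) = out (Suc t)" using Vp[OF O] .
      ultimately show ?thesis using c[OF O] ch by simp
    qed
    show "\<exists>t. V t \<noteq> V (Suc t) \<and> e = {V t, V (Suc t)}" if eE: "e \<in> EG" for e
    proof -
      obtain p where p: "p \<in> Occ" "inn p \<noteq> out p" "e = {inn p, out p}" using d[OF eE] by blast
      have pp: "Suc (p - 1) = p" using p(1) pos by (cases p) auto
      show ?thesis using p Vpm[OF p(1)] Vp[OF p(1)] pp by (intro exI[of _ "p - 1"]) simp
    qed
    fix s t
    assume st: "s < t" and Vst: "V s = V t" and n1: "V (Suc s) \<noteq> V s"
      and n2: "\<forall>r. s < r \<and> r < t \<longrightarrow> V r \<noteq> V s"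
    have O1: "Suc s \<in> Occ" using Vchg n1 by metis
    have i1: "inn (Suc s) = V s" using Vpm[OF O1] by simp
    have o1: "out (Suc s) = V (Suc s)" using Vp[OF O1] by simp
    have st2: "Suc s < t" using st n1 Vst by (metis Suc_lessI)
    have tt: "Suc (t - 1) = t" using st by simp
    have "V (t - 1) \<noteq> V t" using n2[rule_format, of "t - 1"] st2 Vst by simp
    hence O2: "t \<in> Occ" using Vchg[of "t - 1"] tt by metis
    have i2: "inn t = V (t - 1)" using Vpm[OF O2] by simp
    have o2: "out t = V t" using Vp[OF O2] by simp
    have "out (Suc s) = inn t"
    proof (rule exc[OF O1 O2 st2])
      show "inn (Suc s) = out t" using i1 o2 Vst by simp
      show "\<forall>r\<in>Occ. Suc s < r \<and> r \<le> t \<longrightarrow> inn r \<noteq> inn (Suc s)"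
      proof (intro ballI impI)
        fix r assume r: "r \<in> Occ" "Suc s < r \<and> r \<le> t"
        have "inn r = V (r - 1)" using Vpm[OF r(1)] by simp
        moreover have "s < r - 1" "r - 1 < t" using r(2) by auto
        ultimately show "inn r \<noteq> inn (Suc s)" using n2 i1 by auto
      qed
      show "\<forall>r\<in>Occ. Suc s \<le> r \<and> r < t \<longrightarrow> out r \<noteq> inn (Suc s)"
      proof (intro ballI impI)
        fix r assume r: "r \<in> Occ" "Suc s \<le> r \<and> r < t"
        have "out r = V r" using Vp[OF r(1)] by simp
        thus "out r \<noteq> inn (Suc s)" using n2 i1 r(2) by auto
      qed
    qed
    thus "V (Suc s) = V (t - 1)" using o1 i2 by simp
  qed
qed

lemma seg_Cons: "seg u a (Suc n) = u a # seg u (Suc a) n"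
  by (simp add: seg_def upt_rec)

lemma factor_seg: "factor (seg u i n) u"
  by (auto simp: factor_iff)

lemma factor_appendD:
  assumes "factor (x @ y) u"
  shows "factor x u \<and> factor y u"
proof -
  obtain i where i: "x @ y = seg u i (length x + length y)" using assms by (auto simp: factor_iff)
  hence "x @ y = seg u i (length x) @ seg u (i + length x) (length y)" by (simp add: seg_add)
  hence "x = seg u i (length x) \<and> y = seg u (i + length x) (length y)"
    by (simp add: append_eq_append_conv)
  thus ?thesis by (metis factor_seg)
qed

lemma factor_rev: "closed_under_reversal u \<Longrightarrow> factor w u \<Longrightarrow> factor (rev w) u"
  by (simp add: closed_under_reversal_def)

lemma occ_of_factor2:
  assumes "factor (c # w @ [d]) u"
  shows "\<exists>p. 0 < p \<and> seg u p (length w) = w \<and> u (p - 1) = c \<and> u (p + length w) = d"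
proof -
  obtain j where j: "c # w @ [d] = seg u j (Suc (Suc (length w)))" using assms by (auto simp: factor_iff)
  moreover have "seg u j (Suc (Suc (length w))) = u j # seg u (Suc j) (Suc (length w))" by (rule seg_Cons)
  moreover have "seg u (Suc j) (Suc (length w)) = seg u (Suc j) (length w) @ [u (Suc j + length w)]" by (rule seg_Suc)
  ultimately have "c # w @ [d] = u j # (seg u (Suc j) (length w) @ [u (Suc j + length w)])"
    by simp
  thus ?thesis by (intro exI[of _ "Suc j"]) auto
qed

lemma occ_of_factor1:
  assumes "factor (c # w) u"
  shows "\<exists>p. 0 < p \<and> seg u p (length w) = w \<and> u (p - 1) = c"
proof -
  obtain j where j: "c # w = seg u j (Suc (length w))" using assms by (auto simp: factor_iff)
  hence "c # w = u j # seg u (Suc j) (length w)" by (simp add: seg_Cons)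
  thus ?thesis by (intro exI[of _ "Suc j"]) auto
qed

lemma occ_factors:
  assumes "0 < p" "seg u p n = w"
  shows "factor (u (p - 1) # w @ [u (p + n)]) u" "factor (u (p - 1) # w) u" "factor (w @ [u (p + n)]) u"
proof -
  have "seg u (p - 1) (Suc (Suc n)) = u (p - 1) # seg u (Suc (p - 1)) (Suc n)" by (rule seg_Cons)
  moreover have "seg u p (Suc n) = seg u p n @ [u (p + n)]" by (rule seg_Suc)
  ultimately have "seg u (p - 1) (Suc (Suc n)) = u (p - 1) # w @ [u (p + n)]"
    using assms by simp
  thus 1: "factor (u (p - 1) # w @ [u (p + n)]) u" by (metis factor_seg)
  show "factor (u (p - 1) # w) u" using factor_appendD[of "u (p - 1) # w" "[u (p+n)]"] 1 by simp
  show "factor (w @ [u (p + n)]) u" using factor_appendD[of "[u (p - 1)]" "w @ [u (p+n)]"] 1 by simp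
qed

lemma pal_seg_ends:
  assumes "palindrome (seg u a m)" "l \<le> m"
  shows "seg u (a+m-l) l = rev (seg u a l)"
  unfolding seg_rev_iff
proof (intro allI impI)
  fix t assume t: "t < l"
  have H: "\<And>t. t < m \<Longrightarrow> u (a+t) = u (a+m-1-t)" using assms(1) unfolding pal_seg_iff by blast
  have "u (a + (l-1-t)) = u (a + m - 1 - (l-1-t))" using assms(2) t by (intro H) simp
  moreover have "a + (l-1-t) = a + l - 1 - t" "a + m - 1 - (l-1-t) = a + m - l + t" using t assms(2) by auto
  ultimately show "u (a + m - l + t) = u (a + l - 1 - t)" by simp
qed

definition POSP :: "(nat \<Rightarrow> 'a) \<Rightarrow> nat \<Rightarrow> bool" where
  "POSP u N \<longleftrightarrow> (\<forall>n\<ge>N. \<exists>k. k \<le> Suc n \<and> palindrome (seg u (Suc n - k) k) \<and>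
            (\<forall>j. j + k \<le> n \<longrightarrow> seg u j k \<noteq> seg u (Suc n - k) k))"

lemma core_cons:
  assumes P: "POSP u N" and nN: "N < n" and pp: "p < p'"
    and x: "seg u p n = x" and x': "seg u p' n = x'" and xx: "x' = x \<or> x' = rev x"
    and btw: "\<forall>r. p < r \<and> r < p' \<longrightarrow> seg u r n \<noteq> x \<and> seg u r n \<noteq> rev x"
  shows "x' = rev x \<and> u (p + n) = u (p' - 1)"
proof -
  let ?m = "p' - p + n"
  have pal: "palindrome (seg u p ?m)"
  proof (rule lemG[of N u ?m n p])
    show "\<forall>n\<ge>N. \<exists>k\<le>Suc n. palindrome (seg u (Suc n - k) k) \<and> (\<forall>j. j + k \<le> n \<longrightarrow> seg u j k \<noteq> seg u (Suc n - k) k)"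
      using P unfolding POSP_def by blast
    show "N < ?m" "n < ?m" using nN pp by auto
    have "p + ?m - n = p'" using pp by simp
    thus "seg u (p + ?m - n) n = seg u p n \<or> seg u (p + ?m - n) n = rev (seg u p n)"
      using x x' xx by auto
    show "\<forall>j. 0 < j \<and> j < ?m - n \<longrightarrow> seg u (p + j) n \<noteq> seg u p n \<and> seg u (p + j) n \<noteq> rev (seg u p n)"
      using btw x by auto
  qed
  have "seg u (p + ?m - n) n = rev (seg u p n)" by (rule pal_seg_ends[OF pal]) simp
  moreover have "p + ?m - n = p'" using pp by simp
  ultimately have 1: "x' = rev x" using x x' by simp
  have H: "\<And>t. t < ?m \<Longrightarrow> u (p+t) = u (p+?m-1-t)" using pal unfolding pal_seg_iff by blast
  have "u (p + n) = u (p + ?m - 1 - n)" using pp by (intro H) simp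
  moreover have "p + ?m - 1 - n = p' - 1" using pp by simp
  ultimately show ?thesis using 1 by simp
qed

lemma core_exc:
  assumes P: "POSP u N" and nN: "N < n" and p0: "0 < p" and pp: "p < p'"
    and x: "seg u p n = x" and x': "seg u p' n = rev x" and c: "u (p - 1) = u (p' + n)"
    and H1: "\<forall>r. p < r \<and> r \<le> p' \<and> seg u r n = x \<longrightarrow> u (r - 1) \<noteq> u (p - 1)"
    and H2: "\<forall>r. p \<le> r \<and> r < p' \<and> seg u r n = rev x \<longrightarrow> u (r + n) \<noteq> u (p - 1)"
  shows "u (p + n) = u (p' - 1)"
proof -
  let ?m = "p' - p + n + 2" and ?a = "p - 1" and ?l = "Suc n"
  have sa: "seg u ?a ?l = u (p - 1) # x" using p0 x by (simp add: seg_Cons)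
  have pal: "palindrome (seg u ?a ?m)"
  proof (rule lemG[of N u ?m ?l ?a])
    show "\<forall>n\<ge>N. \<exists>k\<le>Suc n. palindrome (seg u (Suc n - k) k) \<and> (\<forall>j. j + k \<le> n \<longrightarrow> seg u j k \<noteq> seg u (Suc n - k) k)"
      using P unfolding POSP_def by blast
    show "N < ?m" "?l < ?m" using nN pp by auto
    have e: "?a + ?m - ?l = p'" using pp p0 by simp
    have "seg u p' ?l = rev x @ [u (p' + n)]" using x' by (simp add: seg_Suc)
    thus "seg u (?a + ?m - ?l) ?l = seg u ?a ?l \<or> seg u (?a + ?m - ?l) ?l = rev (seg u ?a ?l)"
      using e sa c by simp
    show "\<forall>j. 0 < j \<and> j < ?m - ?l \<longrightarrow> seg u (?a + j) ?l \<noteq> seg u ?a ?l \<and> seg u (?a + j) ?l \<noteq> rev (seg u ?a ?l)"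
    proof (intro allI impI conjI)
      fix j assume j: "0 < j \<and> j < ?m - ?l"
      have s1: "seg u (?a + j) ?l = u (p - 1 + j) # seg u (p + j) n"
        using p0 j by (simp add: seg_Cons)
      have s2: "seg u (?a + j) ?l = seg u (p - 1 + j) n @ [u (p - 1 + j + n)]"
        by (simp add: seg_Suc)
      show "seg u (?a + j) ?l \<noteq> seg u ?a ?l"
      proof
        assume "seg u (?a + j) ?l = seg u ?a ?l"
        hence "u (p - 1 + j) = u (p - 1)" "seg u (p + j) n = x" using s1 sa by auto
        moreover have "p < p + j" "p + j \<le> p'" "p + j - 1 = p - 1 + j" using j p0 pp by auto
        ultimately show False using H1 by metis
      qed
      show "seg u (?a + j) ?l \<noteq> rev (seg u ?a ?l)"
      proof
        assume "seg u (?a + j) ?l = rev (seg u ?a ?l)"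
        hence "seg u (p - 1 + j) n @ [u (p - 1 + j + n)] = rev x @ [u (p - 1)]" using s2 sa by simp
        hence "seg u (p - 1 + j) n = rev x" "u (p - 1 + j + n) = u (p - 1)" by auto
        moreover have "p \<le> p - 1 + j" "p - 1 + j < p'" using j p0 pp by auto
        ultimately show False using H2 by metis
      qed
    qed
  qed
  have H: "\<And>t. t < ?m \<Longrightarrow> u (?a+t) = u (?a+?m-1-t)" using pal unfolding pal_seg_iff by blast
  have "u (?a + ?l) = u (?a + ?m - 1 - ?l)" using pp by (intro H) simp
  moreover have "?a + ?l = p + n" "?a + ?m - 1 - ?l = p' - 1" using p0 pp by auto
  ultimately show ?thesis by simp
qed

lemma factor_snoc_range: "factor (w @ [x]) u \<Longrightarrow> x \<in> range u"
proof -
  assume "factor (w @ [x]) u"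
  then obtain i where "w @ [x] = seg u i (Suc (length w))" by (auto simp: factor_iff)
  hence "w @ [x] = seg u i (length w) @ [u (i + length w)]" by (simp only: seg_Suc)
  thus ?thesis by auto
qed

lemma factor_Cons_range: "factor (x # w) u \<Longrightarrow> x \<in> range u"
proof -
  assume "factor (x # w) u"
  then obtain i where "x # w = seg u i (Suc (length w))" by (auto simp: factor_iff)
  hence "x # w = u i # seg u (Suc i) (length w)" by (simp only: seg_Cons)
  thus ?thesis by auto
qed

lemma factor_ext_right: "factor w u \<Longrightarrow> \<exists>c. factor (w @ [c]) u"
proof -
  assume "factor w u"
  then obtain i where i: "w = seg u i (length w)" by (auto simp: factor_iff)
  have "seg u i (Suc (length w)) = w @ [u (i + length w)]" using i by (metis seg_Suc)
  thus ?thesis by (metis factor_seg)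
qed

lemma theta_tree:
  assumes P: "POSP u N" and cl: "closed_under_reversal u" and Au: "range u \<subseteq> A" and fA: "finite A"
    and fw: "factor w u" and pw: "palindrome w" and lw: "N < length w"
  shows "is_tree (Theta_V u w) (Theta_E u w)"
proof -
  let ?n = "length w"
  have rw: "rev w = w" using pw by (simp add: palindrome_def)
  define Occ where "Occ = {p. 0 < p \<and> seg u p ?n = w}"
  have extR: "c \<in> Theta_V u w" if "factor (c # w) u" for c
  proof -
    have "factor (rev (c # w)) u" using factor_rev[OF cl that] .
    thus ?thesis using rw by (simp add: Theta_V_def ext_right_def)
  qed
  have ne: "Occ \<noteq> {}"
  proof -
    obtain c where "factor (w @ [c]) u" using factor_ext_right[OF fw] by blast
    hence fc: "factor (c # w) u" using factor_rev[OF cl, of "w @ [c]"] rw by simp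
    obtain p where "0 < p \<and> seg u p ?n = w \<and> u (p - 1) = c" using occ_of_factor1[OF fc] by blast
    thus ?thesis unfolding Occ_def by blast
  qed
  have pos: "0 \<notin> Occ" by (simp add: Occ_def)
  have cons: "u (p + ?n) = u (p' - 1)"
    if pO: "p \<in> Occ" and p'O: "p' \<in> Occ" and pp: "p < p'"
      and btw: "\<forall>r. p < r \<and> r < p' \<longrightarrow> r \<notin> Occ" for p p'
  proof -
    have b2: "\<forall>r. p < r \<and> r < p' \<longrightarrow> seg u r ?n \<noteq> w \<and> seg u r ?n \<noteq> rev w"
    proof (intro allI impI)
      fix r assume r: "p < r \<and> r < p'"
      hence "r \<notin> Occ" using btw by blast
      moreover have "0 < r" using r by simp
      ultimately have "seg u r ?n \<noteq> w" unfolding Occ_def by blast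
      thus "seg u r ?n \<noteq> w \<and> seg u r ?n \<noteq> rev w" using rw by simp
    qed
    have x: "seg u p ?n = w" "seg u p' ?n = w" using pO p'O unfolding Occ_def by auto
    show ?thesis using core_cons[OF P lw pp x(1) x(2) _ b2] by simp
  qed
  have exc: "u (p + ?n) = u (p' - 1)"
    if pO: "p \<in> Occ" and p'O: "p' \<in> Occ" and pp: "p < p'"
      and eq: "u (p - 1) = u (p' + ?n)"
      and H1: "\<forall>r\<in>Occ. p < r \<and> r \<le> p' \<longrightarrow> u (r - 1) \<noteq> u (p - 1)"
      and H2: "\<forall>r\<in>Occ. p \<le> r \<and> r < p' \<longrightarrow> u (r + ?n) \<noteq> u (p - 1)" for p p'
  proof (rule core_exc[OF P lw _ pp, of w])
    show p0: "0 < p" "seg u p ?n = w" using pO unfolding Occ_def by auto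
    show "seg u p' ?n = rev w" using p'O rw unfolding Occ_def by auto
    show "u (p - 1) = u (p' + ?n)" by (rule eq)
    show "\<forall>r. p < r \<and> r \<le> p' \<and> seg u r ?n = w \<longrightarrow> u (r - 1) \<noteq> u (p - 1)"
    proof (intro allI impI)
      fix r assume r: "p < r \<and> r \<le> p' \<and> seg u r ?n = w"
      hence "r \<in> Occ" unfolding Occ_def by simp
      thus "u (r - 1) \<noteq> u (p - 1)" using H1 r by blast
    qed
    show "\<forall>r. p \<le> r \<and> r < p' \<and> seg u r ?n = rev w \<longrightarrow> u (r + ?n) \<noteq> u (p - 1)"
    proof (intro allI impI)
      fix r assume r: "p \<le> r \<and> r < p' \<and> seg u r ?n = rev w"
      hence "r \<in> Occ" using p0 rw unfolding Occ_def by simp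
      thus "u (r + ?n) \<noteq> u (p - 1)" using H2 r by blast
    qed
  qed
  have fin: "finite (Theta_V u w)"
  proof (rule finite_subset[OF _ fA])
    show "Theta_V u w \<subseteq> A"
    proof
      fix x assume "x \<in> Theta_V u w"
      hence "factor (w @ [x]) u" by (simp add: Theta_V_def ext_right_def)
      hence "x \<in> range u" by (rule factor_snoc_range)
      thus "x \<in> A" using Au by blast
    qed
  qed
  have neV: "Theta_V u w \<noteq> {}"
  proof -
    obtain c where "factor (w @ [c]) u" using factor_ext_right[OF fw] by blast
    hence "c \<in> Theta_V u w" by (simp add: Theta_V_def ext_right_def)
    thus ?thesis by blast
  qed
  have Esub: "Theta_E u w \<subseteq> {{x, y} |x y. x \<in> Theta_V u w \<and> y \<in> Theta_V u w \<and> x \<noteq> y}"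
  proof
    fix e assume "e \<in> Theta_E u w"
    then obtain a b where ab: "e = {a, b}" "factor (a # w @ [b]) u" "a \<noteq> b"
      unfolding Theta_E_def bi_ext_def by blast
    have "factor (a # w) u" using factor_appendD[of "a # w" "[b]"] ab(2) by simp
    hence "a \<in> Theta_V u w" by (rule extR)
    moreover have "factor (w @ [b]) u" using factor_appendD[of "[a]" "w @ [b]"] ab(2) by simp
    hence "b \<in> Theta_V u w" by (simp add: Theta_V_def ext_right_def)
    ultimately show "e \<in> {{x, y} |x y. x \<in> Theta_V u w \<and> y \<in> Theta_V u w \<and> x \<noteq> y}"
      using ab by blast
  qed
  have a: "u (p - 1) \<in> Theta_V u w \<and> u (p + ?n) \<in> Theta_V u w" if pO: "p \<in> Occ" for p
  proof -
    have p: "0 < p" "seg u p ?n = w" using pO unfolding Occ_def by auto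
    note F = occ_factors[OF p]
    show ?thesis using extR[OF F(2)] F(3) by (simp add: Theta_V_def ext_right_def)
  qed
  have c: "{u (p - 1), u (p + ?n)} \<in> Theta_E u w" if pO: "p \<in> Occ" and neq: "u (p - 1) \<noteq> u (p + ?n)" for p
  proof -
    have p: "0 < p" "seg u p ?n = w" using pO unfolding Occ_def by auto
    note F = occ_factors[OF p]
    have "(u (p - 1), u (p + ?n)) \<in> bi_ext u w" using F(1) by (simp add: bi_ext_def)
    thus ?thesis using neq unfolding Theta_E_def by blast
  qed
  have b: "\<exists>p\<in>Occ. u (p - 1) = x" if xV: "x \<in> Theta_V u w" for x
  proof -
    have "factor (w @ [x]) u" using xV by (simp add: Theta_V_def ext_right_def)
    hence fc: "factor (x # w) u" using factor_rev[OF cl, of "w @ [x]"] rw by simp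
    obtain p where "0 < p \<and> seg u p ?n = w \<and> u (p - 1) = x" using occ_of_factor1[OF fc] by blast
    thus ?thesis unfolding Occ_def by blast
  qed
  have d: "\<exists>p\<in>Occ. u (p - 1) \<noteq> u (p + ?n) \<and> e = {u (p - 1), u (p + ?n)}" if eE: "e \<in> Theta_E u w" for e
  proof -
    obtain a b where ab: "e = {a, b}" "factor (a # w @ [b]) u" "a \<noteq> b"
      using eE unfolding Theta_E_def bi_ext_def by blast
    obtain p where "0 < p \<and> seg u p ?n = w \<and> u (p - 1) = a \<and> u (p + ?n) = b"
      using occ_of_factor2[OF ab(2)] by blast
    thus ?thesis using ab unfolding Occ_def by blast
  qed
  show ?thesis
    by (rule tree_from_occ[where Occ=Occ and inn="\<lambda>p. u (p - 1)" and out="\<lambda>p. u (p + ?n)", OF ne pos cons exc fin neV Esub a b c d])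
qed

lemma gamma_tree:
  assumes P: "POSP u N" and cl: "closed_under_reversal u" and Au: "range u \<subseteq> A" and fA: "finite A"
    and fw: "factor w u" and npw: "\<not> palindrome w" and lw: "N < length w"
  shows "is_tree (Gamma_V u w) (Gamma_E u w)"
proof -
  let ?n = "length w"
  have rw: "rev w \<noteq> w" using npw by (simp add: palindrome_def)
  have lrw: "length (rev w) = ?n" by simp
  define Occ where "Occ = {p. 0 < p \<and> (seg u p ?n = w \<or> seg u p ?n = rev w)}"
  define inn where "inn p = (if seg u p ?n = w then Inl (u (p - 1)) else Inr (u (p - 1)))" for p
  define out where "out p = (if seg u p ?n = w then Inr (u (p + ?n)) else Inl (u (p + ?n)))" for p
  have OccI: "p \<in> Occ" if "0 < p" "seg u p ?n = w \<or> seg u p ?n = rev w" for p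
    using that unfolding Occ_def by blast
  have OccD: "0 < p \<and> (seg u p ?n = w \<or> seg u p ?n = rev w)" if "p \<in> Occ" for p
    using that unfolding Occ_def by blast
  have revfac: "factor (rev v) u" if "factor v u" for v using factor_rev[OF cl that] .
  have ne: "Occ \<noteq> {}"
  proof -
    obtain c where "factor (w @ [c]) u" using factor_ext_right[OF fw] by blast
    hence fc: "factor (c # rev w) u" using revfac[of "w @ [c]"] by simp
    obtain p where "0 < p \<and> seg u p (length (rev w)) = rev w \<and> u (p - 1) = c"
      using occ_of_factor1[OF fc] by blast
    hence "p \<in> Occ" using OccI by simp
    thus ?thesis by blast
  qed
  have pos: "0 \<notin> Occ" by (simp add: Occ_def)
  have cons: "out p = inn p'"
    if pO: "p \<in> Occ" and p'O: "p' \<in> Occ" and pp: "p < p'"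
      and btw: "\<forall>r. p < r \<and> r < p' \<longrightarrow> r \<notin> Occ" for p p'
  proof -
    define x where "x = seg u p ?n"
    define x' where "x' = seg u p' ?n"
    have xw: "x = w \<or> x = rev w" using OccD[OF pO] x_def by simp
    have x'w: "x' = w \<or> x' = rev w" using OccD[OF p'O] x'_def by simp
    have b2: "\<forall>r. p < r \<and> r < p' \<longrightarrow> seg u r ?n \<noteq> x \<and> seg u r ?n \<noteq> rev x"
    proof (intro allI impI)
      fix r assume r: "p < r \<and> r < p'"
      hence "r \<notin> Occ" using btw by blast
      moreover have "0 < r" using r by simp
      ultimately have "seg u r ?n \<noteq> w \<and> seg u r ?n \<noteq> rev w" using OccI by blast
      thus "seg u r ?n \<noteq> x \<and> seg u r ?n \<noteq> rev x" using xw by auto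
    qed
    have xx: "x' = x \<or> x' = rev x" using xw x'w by auto
    have cc: "x' = rev x \<and> u (p + ?n) = u (p' - 1)"
      using core_cons[OF P lw pp x_def[symmetric] x'_def[symmetric] xx b2] .
    show ?thesis
    proof (cases "x = w")
      case True
      hence "x' \<noteq> w" using cc rw by simp
      thus ?thesis using True cc unfolding out_def inn_def x_def x'_def by simp
    next
      case False
      hence "x = rev w" using xw by simp
      hence "x' = w" using cc by simp
      thus ?thesis using False cc unfolding out_def inn_def x_def x'_def by simp
    qed
  qed
  have exc: "out p = inn p'"
    if pO: "p \<in> Occ" and p'O: "p' \<in> Occ" and pp: "p < p'"
      and eq: "inn p = out p'"
      and H1: "\<forall>r\<in>Occ. p < r \<and> r \<le> p' \<longrightarrow> inn r \<noteq> inn p"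
      and H2: "\<forall>r\<in>Occ. p \<le> r \<and> r < p' \<longrightarrow> out r \<noteq> inn p" for p p'
  proof -
    define x where "x = seg u p ?n"
    have p0: "0 < p" using OccD[OF pO] by simp
    have xw: "x = w \<or> x = rev w" using OccD[OF pO] x_def by simp
    have rx: "rev x \<noteq> x" using xw rw by auto
    have innp: "inn p = (if x = w then Inl (u (p - 1)) else Inr (u (p - 1)))" unfolding inn_def x_def by simp
    have x': "seg u p' ?n = rev x \<and> u (p - 1) = u (p' + ?n)"
    proof (cases "x = w")
      case True
      thus ?thesis using eq OccD[OF p'O] unfolding innp out_def by (auto split: if_splits)
    next
      case False
      hence "x = rev w" using xw by simp
      thus ?thesis using False eq OccD[OF p'O] unfolding innp out_def by (auto split: if_splits)
    qed
    have H1': "\<forall>r. p < r \<and> r \<le> p' \<and> seg u r ?n = x \<longrightarrow> u (r - 1) \<noteq> u (p - 1)"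
    proof (intro allI impI)
      fix r assume r: "p < r \<and> r \<le> p' \<and> seg u r ?n = x"
      hence rO: "r \<in> Occ" using xw OccI[of r] by auto
      have ir: "inn r = (if x = w then Inl (u (r - 1)) else Inr (u (r - 1)))" using r unfolding inn_def by simp
      show "u (r - 1) \<noteq> u (p - 1)"
      proof
        assume "u (r - 1) = u (p - 1)"
        hence "inn r = inn p" using ir innp by simp
        thus False using H1 rO r by blast
      qed
    qed
    have H2': "\<forall>r. p \<le> r \<and> r < p' \<and> seg u r ?n = rev x \<longrightarrow> u (r + ?n) \<noteq> u (p - 1)"
    proof (intro allI impI)
      fix r assume r: "p \<le> r \<and> r < p' \<and> seg u r ?n = rev x"
      hence rO: "r \<in> Occ" using xw OccI[of r] p0 by auto
      have orr: "out r = (if x = w then Inl (u (r + ?n)) else Inr (u (r + ?n)))"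
        using r xw rw unfolding out_def by auto
      show "u (r + ?n) \<noteq> u (p - 1)"
      proof
        assume "u (r + ?n) = u (p - 1)"
        hence "out r = inn p" using orr innp by simp
        thus False using H2 rO r by blast
      qed
    qed
    have core: "u (p + ?n) = u (p' - 1)"
      using core_exc[OF P lw p0 pp x_def[symmetric] conjunct1[OF x'] conjunct2[OF x'] H1' H2'] .
    show ?thesis
    proof (cases "x = w")
      case True
      hence "seg u p' ?n \<noteq> w" using x' rw by simp
      thus ?thesis using True core unfolding out_def inn_def x_def by simp
    next
      case False
      hence "seg u p' ?n = w" using x' xw by auto
      thus ?thesis using False core unfolding out_def inn_def x_def by simp
    qed
  qed
  have fin: "finite (Gamma_V u w)"
  proof (rule finite_subset[of _ "Inl ` A \<union> Inr ` A"])
    show "finite (Inl ` A \<union> Inr ` A)" using fA by simp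
    have "ext_left u w \<subseteq> A"
    proof
      fix x assume "x \<in> ext_left u w"
      hence "factor (x # w) u" by (simp add: ext_left_def)
      hence "x \<in> range u" by (rule factor_Cons_range)
      thus "x \<in> A" using Au by blast
    qed
    moreover have "ext_right u w \<subseteq> A"
    proof
      fix x assume "x \<in> ext_right u w"
      hence "factor (w @ [x]) u" by (simp add: ext_right_def)
      hence "x \<in> range u" by (rule factor_snoc_range)
      thus "x \<in> A" using Au by blast
    qed
    ultimately show "Gamma_V u w \<subseteq> Inl ` A \<union> Inr ` A" unfolding Gamma_V_def by blast
  qed
  have neV: "Gamma_V u w \<noteq> {}"
  proof -
    obtain c where "factor (w @ [c]) u" using factor_ext_right[OF fw] by blast
    hence "c \<in> ext_right u w" by (simp add: ext_right_def)
    thus ?thesis unfolding Gamma_V_def by blast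
  qed
  have Esub: "Gamma_E u w \<subseteq> {{x, y} |x y. x \<in> Gamma_V u w \<and> y \<in> Gamma_V u w \<and> x \<noteq> y}"
  proof
    fix e assume "e \<in> Gamma_E u w"
    then obtain a b where ab: "e = {Inl a, Inr b}" "factor (a # w @ [b]) u"
      unfolding Gamma_E_def bi_ext_def by blast
    have "factor (a # w) u" using factor_appendD[of "a # w" "[b]"] ab(2) by simp
    hence "a \<in> ext_left u w" by (simp add: ext_left_def)
    moreover have "factor (w @ [b]) u" using factor_appendD[of "[a]" "w @ [b]"] ab(2) by simp
    hence "b \<in> ext_right u w" by (simp add: ext_right_def)
    ultimately have "Inl a \<in> Gamma_V u w" "Inr b \<in> Gamma_V u w" unfolding Gamma_V_def by auto
    thus "e \<in> {{x, y} |x y. x \<in> Gamma_V u w \<and> y \<in> Gamma_V u w \<and> x \<noteq> y}"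
      using ab(1) by blast
  qed
  have a: "inn p \<in> Gamma_V u w \<and> out p \<in> Gamma_V u w" if pO: "p \<in> Occ" for p
  proof (cases "seg u p ?n = w")
    case True
    have p: "0 < p" "seg u p ?n = w" using OccD[OF pO] True by auto
    note F = occ_factors[OF p]
    have "u (p - 1) \<in> ext_left u w" using F(2) by (simp add: ext_left_def)
    moreover have "u (p + ?n) \<in> ext_right u w" using F(3) by (simp add: ext_right_def)
    ultimately show ?thesis using True unfolding inn_def out_def Gamma_V_def by auto
  next
    case False
    have p: "0 < p" "seg u p (length (rev w)) = rev w" using OccD[OF pO] False by auto
    note F = occ_factors[OF p]
    have "factor (w @ [u (p - 1)]) u" using revfac[OF F(2)] by simp
    hence "u (p - 1) \<in> ext_right u w" by (simp add: ext_right_def)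
    moreover have "factor (u (p + ?n) # w) u" using revfac[OF F(3)] by simp
    hence "u (p + ?n) \<in> ext_left u w" by (simp add: ext_left_def)
    ultimately show ?thesis using False unfolding inn_def out_def Gamma_V_def by auto
  qed
  have c: "{inn p, out p} \<in> Gamma_E u w" if pO: "p \<in> Occ" and neq: "inn p \<noteq> out p" for p
  proof (cases "seg u p ?n = w")
    case True
    have p: "0 < p" "seg u p ?n = w" using OccD[OF pO] True by auto
    note F = occ_factors[OF p]
    have "(u (p - 1), u (p + ?n)) \<in> bi_ext u w" using F(1) by (simp add: bi_ext_def)
    hence "{Inl (u (p - 1)), Inr (u (p + ?n))} \<in> Gamma_E u w" unfolding Gamma_E_def by blast
    thus ?thesis using True unfolding inn_def out_def by simp
  next
    case False
    have p: "0 < p" "seg u p (length (rev w)) = rev w" using OccD[OF pO] False by auto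
    note F = occ_factors[OF p]
    have "factor (u (p + ?n) # w @ [u (p - 1)]) u" using revfac[OF F(1)] by simp
    hence "(u (p + ?n), u (p - 1)) \<in> bi_ext u w" by (simp add: bi_ext_def)
    hence "{Inl (u (p + ?n)), Inr (u (p - 1))} \<in> Gamma_E u w" unfolding Gamma_E_def by blast
    thus ?thesis using False unfolding inn_def out_def by (simp add: insert_commute)
  qed
  have b: "\<exists>p\<in>Occ. inn p = x" if xV: "x \<in> Gamma_V u w" for x
  proof -
    from xV consider (L) a where "x = Inl a" "a \<in> ext_left u w" | (R) b where "x = Inr b" "b \<in> ext_right u w"
      unfolding Gamma_V_def by blast
    thus ?thesis
    proof cases
      case L
      hence fc: "factor (a # w) u" by (simp add: ext_left_def)
      obtain p where p: "0 < p \<and> seg u p ?n = w \<and> u (p - 1) = a" using occ_of_factor1[OF fc] by blast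
      hence "p \<in> Occ" using OccI by blast
      moreover have "inn p = x" using p L unfolding inn_def by simp
      ultimately show ?thesis by blast
    next
      case R
      hence "factor (w @ [b]) u" by (simp add: ext_right_def)
      hence fc: "factor (b # rev w) u" using revfac[of "w @ [b]"] by simp
      obtain p where p: "0 < p \<and> seg u p (length (rev w)) = rev w \<and> u (p - 1) = b"
        using occ_of_factor1[OF fc] by blast
      hence "p \<in> Occ" using OccI by simp
      moreover have "inn p = x" using p R rw unfolding inn_def by simp
      ultimately show ?thesis by blast
    qed
  qed
  have d: "\<exists>p\<in>Occ. inn p \<noteq> out p \<and> e = {inn p, out p}" if eE: "e \<in> Gamma_E u w" for e
  proof -
    obtain a b where ab: "e = {Inl a, Inr b}" "factor (a # w @ [b]) u"
      using eE unfolding Gamma_E_def bi_ext_def by blast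
    obtain p where p: "0 < p \<and> seg u p ?n = w \<and> u (p - 1) = a \<and> u (p + ?n) = b"
      using occ_of_factor2[OF ab(2)] by blast
    hence "p \<in> Occ" using OccI by blast
    moreover have "inn p = Inl a" "out p = Inr b" using p unfolding inn_def out_def by auto
    moreover have "inn p \<noteq> out p" using calculation(2,3) by simp
    ultimately show ?thesis using ab(1) by (intro bexI[of _ p]) simp_all
  qed
  show ?thesis
    by (rule tree_from_occ[where Occ=Occ and inn=inn and out=out, OF ne pos cons exc fin neV Esub a b c d])
qed

theorem corollary22:
  fixes u :: "nat \<Rightarrow> 'a" and A :: "'a set"
  assumes "finite A" and "range u \<subseteq> A"
    and "closed_under_reversal u"
    and "finite_defect u"
  shows "\<exists>K::nat. K > 0 \<and>
     (\<forall>w. factor w u \<and> length w \<ge> K \<longrightarrow>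
        (\<not> palindrome w \<longrightarrow> is_tree (Gamma_V u w) (Gamma_E u w)) \<and>
        (palindrome w \<longrightarrow> is_tree (Theta_V u w) (Theta_E u w)))"
proof -
  obtain N where P: "POSP u N" using POS[OF assms(4)] unfolding POSP_def by blast
  have "\<forall>w. factor w u \<and> length w \<ge> Suc N \<longrightarrow>
        (\<not> palindrome w \<longrightarrow> is_tree (Gamma_V u w) (Gamma_E u w)) \<and>
        (palindrome w \<longrightarrow> is_tree (Theta_V u w) (Theta_E u w))"
  proof (intro allI impI)
    fix w assume w: "factor w u \<and> length w \<ge> Suc N"
    hence lw: "N < length w" by simp
    show "(\<not> palindrome w \<longrightarrow> is_tree (Gamma_V u w) (Gamma_E u w)) \<and>
        (palindrome w \<longrightarrow> is_tree (Theta_V u w) (Theta_E u w))"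
      using gamma_tree[OF P assms(3) assms(2) assms(1) conjunct1[OF w] _ lw]
        theta_tree[OF P assms(3) assms(2) assms(1) conjunct1[OF w] _ lw] by blast
  qed
  thus ?thesis by (intro exI[of _ "Suc N"]) simp
qed

end
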